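(* If $c\in\mathbb{R}^m$ generates an extreme ray of $C_{\mathrm{SAGE}}(A)$, then the set $\{a_i: i\in[m],\ c_i\ne 0\}$ is either a singleton or a simplicial circuit.
   Context: Let $A\in\mathbb{R}^{n\times m}$ have distinct columns $a_1,\dots,a_m$. For $c\in\mathbb{R}^m$, $\mathrm{Sig}(A,c)$ denotes the function $x\mapsto\sum_{i=1}^m c_i\exp(a_i^\top x)$ on $\mathbb{R}^n$. $C_{\mathrm{NNS}}(A)=\{c\in\mathbb{R}^m:\mathrm{Sig}(A,c)(x)\ge 0\ \forall x\in\mathbb{R}^n\}$. For $k\in[m]$, the $k$-th AGE cone is $C_{\mathrm{AGE}}(A,k)=\{c\in C_{\mathrm{NNS}}(A): c_i\ge 0\ \forall i\ne k\}$, and the SAGE cone is the Minkowski sum $C_{\mathrm{SAGE}}(A)=\sum_{k=1}^m C_{\mathrm{AGE}}(A,k)$. A finite point set $\{x_1,\dots,x_\ell\}$ is a circuit if it is affinely dependent but every proper subset is affinely independent; a circuit with $\ell$ elements is simplicial if its convex hull has exactly $\ell-1$ extreme points. *)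

theory Defs
  imports "HOL-Analysis.Analysis"
begin

text \<open>The matrix A is given by its columns a :: 'm => real^'n, where the finite
type 'm plays the role of the index set [m].  Coefficient vectors are c :: real^'m.\<close>

definition Sig :: "('m::finite \<Rightarrow> real^'n) \<Rightarrow> real^'m \<Rightarrow> real^'n \<Rightarrow> real" where
  "Sig a c x = (\<Sum>i\<in>UNIV. c $ i * exp (a i \<bullet> x))"

definition C_NNS :: "('m::finite \<Rightarrow> real^'n) \<Rightarrow> (real^'m) set" where
  "C_NNS a = {c. \<forall>x. Sig a c x \<ge> 0}"

definition C_AGE :: "('m::finite \<Rightarrow> real^'n) \<Rightarrow> 'm \<Rightarrow> (real^'m) set" where
  "C_AGE a k = {c \<in> C_NNS a. \<forall>i. i \<noteq> k \<longrightarrow> c $ i \<ge> 0}"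

definition C_SAGE :: "('m::finite \<Rightarrow> real^'n) \<Rightarrow> (real^'m) set" where
  "C_SAGE a = {c. \<exists>f. (\<forall>k. f k \<in> C_AGE a k) \<and> c = (\<Sum>k\<in>UNIV. f k)}"

definition generates_extreme_ray :: "'v::real_vector set \<Rightarrow> 'v \<Rightarrow> bool" where
  "generates_extreme_ray C c \<longleftrightarrow> c \<noteq> 0 \<and> ((\<lambda>t. t *\<^sub>R c) ` {0..}) face_of C"

definition circuit :: "'v::euclidean_space set \<Rightarrow> bool" where
  "circuit S \<longleftrightarrow> finite S \<and> affine_dependent S \<and> (\<forall>T. T \<subset> S \<longrightarrow> \<not> affine_dependent T)"

definition simplicial_circuit :: "'v::euclidean_space set \<Rightarrow> bool" where
  "simplicial_circuit S \<longleftrightarrow> circuit S \<and>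
     card {p. p extreme_point_of (convex hull S)} = card S - 1"

end

theory Submission
  imports Defs
begin

lemma Sig_add: "Sig a (c + d) x = Sig a c x + Sig a d x"
  by (simp add: Sig_def distrib_right sum.distrib)

lemma Sig_scale: "Sig a (t *\<^sub>R c) x = t * Sig a c x"
  by (simp add: Sig_def sum_distrib_left mult.assoc)

lemma NNS_add: "c \<in> C_NNS a \<Longrightarrow> d \<in> C_NNS a \<Longrightarrow> c + d \<in> C_NNS a"
  by (simp add: C_NNS_def Sig_add add_nonneg_nonneg)

lemma NNS_scale: "c \<in> C_NNS a \<Longrightarrow> 0 \<le> t \<Longrightarrow> t *\<^sub>R c \<in> C_NNS a"
  by (simp add: C_NNS_def Sig_scale)

lemma AGE_add: "c \<in> C_AGE a k \<Longrightarrow> d \<in> C_AGE a k \<Longrightarrow> c + d \<in> C_AGE a k"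
  by (simp add: C_AGE_def NNS_add)

lemma AGE_scale: "c \<in> C_AGE a k \<Longrightarrow> 0 \<le> t \<Longrightarrow> t *\<^sub>R c \<in> C_AGE a k"
  by (simp add: C_AGE_def NNS_scale)

lemma nonneg_NNS: "(\<forall>i. 0 \<le> c $ i) \<Longrightarrow> c \<in> C_NNS a"
  by (auto simp: C_NNS_def Sig_def intro!: sum_nonneg)

lemma nonneg_AGE: "(\<forall>i. 0 \<le> c $ i) \<Longrightarrow> c \<in> C_AGE a k"
  by (simp add: C_AGE_def nonneg_NNS)

lemma AGE_SAGE: "c \<in> C_AGE a k \<Longrightarrow> c \<in> C_SAGE a"
proof -
  assume c: "c \<in> C_AGE a k"
  have "\<forall>j. (if j = k then c else 0) \<in> C_AGE a j"
    using c nonneg_AGE[of 0 a] by auto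
  moreover have "c = (\<Sum>j\<in>UNIV. if j = k then c else 0)" by simp
  ultimately show ?thesis unfolding C_SAGE_def mem_Collect_eq
    by (intro exI[where x="\<lambda>j. if j = k then c else 0"]) simp
qed

lemma nonneg_SAGE: "(\<forall>i. 0 \<le> c $ i) \<Longrightarrow> c \<in> C_SAGE a"
  using AGE_SAGE nonneg_AGE by blast

lemma SAGE_add: "c \<in> C_SAGE a \<Longrightarrow> d \<in> C_SAGE a \<Longrightarrow> c + d \<in> C_SAGE a"
  unfolding C_SAGE_def
  apply clarify
  subgoal for f g
    by (rule exI[of _ "\<lambda>k. f k + g k"]) (auto simp: AGE_add sum.distrib)
  done

lemma SAGE_scale: "c \<in> C_SAGE a \<Longrightarrow> 0 \<le> t \<Longrightarrow> t *\<^sub>R c \<in> C_SAGE a"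
  unfolding C_SAGE_def
  apply clarify
  subgoal for f
    by (rule exI[of _ "\<lambda>k. t *\<^sub>R f k"]) (auto simp: AGE_scale scaleR_sum_right)
  done

lemma ray_face:
  fixes c :: "'v::real_vector"
  assumes F: "((\<lambda>t. t *\<^sub>R c) ` {0..}) face_of C"
    and xC: "2 *\<^sub>R x \<in> C" and yC: "2 *\<^sub>R y \<in> C" and s: "x + y = c"
  shows "\<exists>t\<ge>0. x = t *\<^sub>R c"
proof (cases "x = y")
  case True
  then show ?thesis using s by (intro exI[of _ "1/2"]) (auto simp: scaleR_2[symmetric])
next
  case False
  have "c = midpoint (2 *\<^sub>R x) (2 *\<^sub>R y)" using s by (simp add: midpoint_def scaleR_add_right[symmetric])
  moreover have "midpoint (2 *\<^sub>R x) (2 *\<^sub>R y) \<in> open_segment (2 *\<^sub>R x) (2 *\<^sub>R y)"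
    using False by simp
  moreover have "c \<in> (\<lambda>t. t *\<^sub>R c) ` {0..}" by (rule image_eqI[of _ _ 1]) auto
  ultimately have "2 *\<^sub>R x \<in> (\<lambda>t. t *\<^sub>R c) ` {0..}"
    using F xC yC unfolding face_of_def by metis
  then obtain t where "t \<ge> 0" "2 *\<^sub>R x = t *\<^sub>R c" by auto
  then have "x = (t/2) *\<^sub>R c"
  proof -
    have "x = (1/2) *\<^sub>R (2 *\<^sub>R x)" by simp
    also have "\<dots> = (1/2) *\<^sub>R (t *\<^sub>R c)" using \<open>2 *\<^sub>R x = t *\<^sub>R c\<close> by simp
    finally show ?thesis by simp
  qed
  then show ?thesis using \<open>t \<ge> 0\<close> by (intro exI[of _ "t/2"]) auto
qed

lemma Sig_split:
  fixes a :: "'m::finite \<Rightarrow> real^'n"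
  assumes "k \<notin> S" "\<And>i. i \<notin> S \<Longrightarrow> i \<noteq> k \<Longrightarrow> c$i = 0"
  shows "Sig a c x = exp (a k \<bullet> x) * (c$k + (\<Sum>i\<in>S. c$i * exp ((a i - a k) \<bullet> x)))"
proof -
  have "Sig a c x = (\<Sum>i\<in>insert k S. c$i * exp (a i \<bullet> x))"
    unfolding Sig_def by (rule sum.mono_neutral_right) (auto simp: assms)
  also have "\<dots> = c$k * exp(a k \<bullet> x) + (\<Sum>i\<in>S. c$i * exp (a i \<bullet> x))"
    using assms(1) by simp
  also have "(\<Sum>i\<in>S. c$i * exp (a i \<bullet> x)) = (\<Sum>i\<in>S. exp (a k \<bullet> x) * (c$i * exp ((a i - a k) \<bullet> x)))"
    by (rule sum.cong) (auto simp: inner_diff_left exp_diff)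
  finally show ?thesis by (simp add: sum_distrib_left algebra_simps)
qed

lemma AGE_from_nu:
  fixes a :: "'m::finite \<Rightarrow> real^'n"
  assumes kS: "k \<notin> S" and nn: "\<forall>i\<in>S. 0 \<le> \<nu> i" and bal: "(\<Sum>i\<in>S. \<nu> i *\<^sub>R (a i - a k)) = 0"
  shows "(\<chi> i. if i \<in> S then \<nu> i * exp (-((a i - a k) \<bullet> x0)) else if i = k then -(\<Sum>j\<in>S. \<nu> j) else 0) \<in> C_AGE a k"
    (is "?d \<in> _")
proof -
  have nonneg: "\<forall>i. i \<noteq> k \<longrightarrow> 0 \<le> ?d $ i" using nn by auto
  have "0 \<le> Sig a ?d x" for x
  proof -
    have sp: "Sig a ?d x = exp (a k \<bullet> x) * (?d$k + (\<Sum>i\<in>S. ?d$i * exp ((a i - a k) \<bullet> x)))"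
      by (rule Sig_split) (use kS in auto)
    have "(\<Sum>i\<in>S. \<nu> i + \<nu> i * ((a i - a k) \<bullet> (x - x0))) \<le> (\<Sum>i\<in>S. ?d$i * exp ((a i - a k) \<bullet> x))"
    proof (rule sum_mono)
      fix i assume i: "i \<in> S"
      have "?d$i * exp ((a i - a k) \<bullet> x) = \<nu> i * exp ((a i - a k) \<bullet> (x - x0))"
        using i by (simp add: inner_diff_right exp_diff exp_minus field_simps)
      also have "\<dots> \<ge> \<nu> i * (1 + (a i - a k) \<bullet> (x - x0))"
        using nn i by (intro mult_left_mono) auto
      finally show "\<nu> i + \<nu> i * ((a i - a k) \<bullet> (x - x0)) \<le> ?d$i * exp ((a i - a k) \<bullet> x)"
        by (simp add: algebra_simps)
    qed
    moreover have "(\<Sum>i\<in>S. \<nu> i * ((a i - a k) \<bullet> (x - x0))) = (\<Sum>i\<in>S. \<nu> i *\<^sub>R (a i - a k)) \<bullet> (x - x0)"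
      by (simp add: inner_sum_left)
    ultimately have "(\<Sum>j\<in>S. \<nu> j) \<le> (\<Sum>i\<in>S. ?d$i * exp ((a i - a k) \<bullet> x))"
      using bal by (simp add: sum.distrib)
    then have "0 \<le> ?d$k + (\<Sum>i\<in>S. ?d$i * exp ((a i - a k) \<bullet> x))" using kS by simp
    then show ?thesis unfolding sp by simp
  qed
  then show ?thesis using nonneg by (simp add: C_AGE_def C_NNS_def)
qed

lemma exp_lim: "(d::real) < 0 \<Longrightarrow> ((\<lambda>t. exp (t * d)) \<longlongrightarrow> 0) at_top"
proof -
  assume d: "d < 0"
  have "filterlim (\<lambda>t::real. d * t) at_bot at_top"
    by (rule filterlim_tendsto_neg_mult_at_bot[OF tendsto_const d filterlim_ident])
  then have "filterlim (\<lambda>t::real. t * d) at_bot at_top" by (simp add: mult.commute)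
  then show ?thesis by (rule filterlim_compose[OF exp_at_bot])
qed

lemma noy:
  fixes a :: "'m::finite \<Rightarrow> real^'n" and c :: "real^'m"
  assumes ext: "\<And>x y. x \<in> C_SAGE a \<Longrightarrow> y \<in> C_SAGE a \<Longrightarrow> x + y = c \<Longrightarrow> \<exists>t\<ge>0. x = t *\<^sub>R c"
    and cAGE: "c \<in> C_AGE a k" and ck: "c$k < 0"
    and yle: "\<forall>i. i \<noteq> k \<and> c$i \<noteq> 0 \<longrightarrow> (a i - a k) \<bullet> y \<le> 0"
  shows "\<forall>i. i \<noteq> k \<and> c$i \<noteq> 0 \<longrightarrow> (a i - a k) \<bullet> y = 0"
proof (rule ccontr)
  define S where "S = {i. i \<noteq> k \<and> c$i \<noteq> 0}"
  define F where "F = {i\<in>S. (a i - a k) \<bullet> y = 0}"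
  define cF where "cF = (\<chi> i. if i \<in> S - F then 0 else c$i)"
  assume "\<not> (\<forall>i. i \<noteq> k \<and> c$i \<noteq> 0 \<longrightarrow> (a i - a k) \<bullet> y = 0)"
  then obtain j where j: "j \<in> S" "j \<notin> F" by (auto simp: S_def F_def)
  have cpos: "\<forall>i\<in>S. 0 < c$i" using cAGE by (auto simp: C_AGE_def S_def order_le_less)
  have cnn: "c \<in> C_NNS a" using cAGE by (simp add: C_AGE_def)
  have kS: "k \<notin> S" "k \<notin> F" by (auto simp: S_def F_def)
  have FS: "F \<subseteq> S" by (auto simp: F_def)
  have ylt: "\<forall>i\<in>S-F. (a i - a k) \<bullet> y < 0" using yle by (force simp: S_def F_def)
  have "0 \<le> Sig a cF x" for x
  proof -
    let ?h = "\<lambda>t. c$k + (\<Sum>i\<in>S. c$i * exp ((a i - a k) \<bullet> (x + t *\<^sub>R y)))"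
    let ?L = "c$k + (\<Sum>i\<in>F. c$i * exp ((a i - a k) \<bullet> x))"
    have hnn: "0 \<le> ?h t" for t
    proof -
      have "0 \<le> Sig a c (x + t *\<^sub>R y)" using cnn by (simp add: C_NNS_def)
      also have "Sig a c (x + t *\<^sub>R y) = exp (a k \<bullet> (x + t *\<^sub>R y)) * ?h t"
        by (rule Sig_split) (auto simp: S_def)
      finally show ?thesis by (simp add: zero_le_mult_iff)
    qed
    have eq: "?h t = ?L + (\<Sum>i\<in>S-F. c$i * exp ((a i - a k) \<bullet> x) * exp (t * ((a i - a k) \<bullet> y)))" for t
    proof -
      have "(\<Sum>i\<in>S. c$i * exp ((a i - a k) \<bullet> (x + t *\<^sub>R y))) =
          (\<Sum>i\<in>S-F. c$i * exp ((a i - a k) \<bullet> (x + t *\<^sub>R y))) + (\<Sum>i\<in>F. c$i * exp ((a i - a k) \<bullet> (x + t *\<^sub>R y)))"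
        by (rule sum.subset_diff[OF FS]) simp
      also have "(\<Sum>i\<in>F. c$i * exp ((a i - a k) \<bullet> (x + t *\<^sub>R y))) = (\<Sum>i\<in>F. c$i * exp ((a i - a k) \<bullet> x))"
        by (rule sum.cong) (auto simp: F_def inner_add_right)
      also have "(\<Sum>i\<in>S-F. c$i * exp ((a i - a k) \<bullet> (x + t *\<^sub>R y))) = (\<Sum>i\<in>S-F. c$i * exp ((a i - a k) \<bullet> x) * exp (t * ((a i - a k) \<bullet> y)))"
        by (rule sum.cong) (auto simp: inner_add_right exp_add)
      finally show ?thesis by simp
    qed
    have lim: "(?h \<longlongrightarrow> ?L + 0) at_top"
      unfolding eq
    proof (intro tendsto_add tendsto_const tendsto_null_sum)
      fix i assume "i \<in> S - F"
      then have "((\<lambda>t. exp (t * ((a i - a k) \<bullet> y))) \<longlongrightarrow> 0) at_top" using ylt exp_lim by blast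
      then show "((\<lambda>t. c$i * exp ((a i - a k) \<bullet> x) * exp (t * ((a i - a k) \<bullet> y))) \<longlongrightarrow> 0) at_top"
        using tendsto_mult_right_zero[OF \<open>((\<lambda>t. exp (t * ((a i - a k) \<bullet> y))) \<longlongrightarrow> 0) at_top\<close>, of "c$i * exp ((a i - a k) \<bullet> x)"]
        by simp
    qed
    have "0 \<le> ?L + 0"
      by (rule tendsto_lowerbound[OF lim]) (use hnn in \<open>simp_all add: always_eventually trivial_limit_at_top_linorder\<close>)
    moreover have "Sig a cF x = exp (a k \<bullet> x) * (cF$k + (\<Sum>i\<in>F. cF$i * exp ((a i - a k) \<bullet> x)))"
      by (rule Sig_split) (use kS in \<open>simp_all add: cF_def S_def\<close>)
    moreover have "cF$k + (\<Sum>i\<in>F. cF$i * exp ((a i - a k) \<bullet> x)) = ?L"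
      using kS FS by (simp add: cF_def)
    ultimately show ?thesis by simp
  qed
  moreover have "\<forall>i. i \<noteq> k \<longrightarrow> 0 \<le> cF $ i" using cAGE by (simp add: C_AGE_def cF_def)
  ultimately have cF_AGE: "cF \<in> C_AGE a k" by (simp add: C_AGE_def C_NNS_def)
  have rest: "c - cF \<in> C_SAGE a"
    by (rule nonneg_SAGE) (use cpos in \<open>auto simp: cF_def less_imp_le\<close>)
  from ext[OF rest AGE_SAGE[OF cF_AGE]] obtain t where t: "t \<ge> 0" "c - cF = t *\<^sub>R c" by auto
  have "(c - cF)$k = 0" using kS by (simp add: cF_def)
  then have "t * c$k = 0" using arg_cong[OF t(2), of "\<lambda>v. v$k"] by simp
  then have "t = 0" using ck by simp
  then have "(c - cF)$j = 0" using t by simp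
  moreover have "(c - cF)$j = c$j" using j by (simp add: cF_def)
  ultimately show False using cpos j by auto
qed

lemma exp_ge_max0: "max 0 (u::real) \<le> exp u"
proof -
  have "u < 1 + u" by simp
  also have "\<dots> \<le> exp u" by simp
  finally show ?thesis by (simp add: less_imp_le)
qed

lemma minimizer_exists:
  fixes b :: "'m \<Rightarrow> real^'n" and w :: "'m \<Rightarrow> real"
  assumes fin: "finite S" and wpos: "\<forall>i\<in>S. 0 < w i"
    and noy: "\<forall>y. (\<forall>i\<in>S. b i \<bullet> y \<le> 0) \<longrightarrow> (\<forall>i\<in>S. b i \<bullet> y = 0)"
  shows "\<exists>x0. \<forall>x. (\<Sum>i\<in>S. w i * exp (b i \<bullet> x0)) \<le> (\<Sum>i\<in>S. w i * exp (b i \<bullet> x))"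
proof (cases "S = {}")
  case True then show ?thesis by simp
next
  case Sne: False
  define V where "V = span (b ` S)"
  define g where "g x = (\<Sum>i\<in>S. w i * exp (b i \<bullet> x))" for x
  define h where "h x = (\<Sum>i\<in>S. max 0 (b i \<bullet> x))" for x
  define wm where "wm = Min (w ` S)"
  have wm: "0 < wm" "\<forall>i\<in>S. wm \<le> w i" using fin Sne wpos by (auto simp: wm_def)
  have hnn: "0 \<le> h x" for x by (simp add: h_def sum_nonneg)
  have pos: "0 < h x" if "x \<in> V" "x \<noteq> 0" for x
  proof (rule ccontr)
    assume "\<not> 0 < h x"
    then have "h x = 0" using hnn[of x] by simp
    then have "\<forall>i\<in>S. max 0 (b i \<bullet> x) = 0" unfolding h_def using fin
      by (subst (asm) sum_nonneg_eq_0_iff) auto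
    then have "\<forall>i\<in>S. b i \<bullet> x \<le> 0" by (metis max.cobounded2)
    then have "\<forall>i\<in>S. b i \<bullet> x = 0" using noy by blast
    then have "orthogonal x v" if "v \<in> b ` S" for v using that by (auto simp: orthogonal_def inner_commute)
    then have "orthogonal x x" using orthogonal_to_span[of x "b ` S" x] \<open>x \<in> V\<close> V_def by blast
    then show False using \<open>x \<noteq> 0\<close> by (simp add: orthogonal_def)
  qed
  have hcont: "continuous_on UNIV h" unfolding h_def by (intro continuous_intros)
  have gcont: "continuous_on UNIV g" unfolding g_def by (intro continuous_intros)
  obtain \<delta> where \<delta>: "0 < \<delta>" "\<forall>x\<in>sphere 0 1 \<inter> V. \<delta> \<le> h x"
  proof (cases "sphere 0 1 \<inter> V = {}")
    case True then show ?thesis using that[of 1] by auto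
  next
    case False
    have "compact (sphere 0 1 \<inter> V)" unfolding V_def by (intro compact_Int_closed) auto
    then obtain x1 where x1: "x1 \<in> sphere 0 1 \<inter> V" "\<forall>y\<in>sphere 0 1 \<inter> V. h x1 \<le> h y"
      using continuous_attains_inf[of "sphere 0 1 \<inter> V" h] False continuous_on_subset[OF hcont] by blast
    have "x1 \<noteq> 0" using x1 by (metis IntD1 mem_sphere_0 norm_zero zero_neq_one)
    then have "0 < h x1" using pos x1 by blast
    then show ?thesis using that x1 by blast
  qed
  have hlin: "\<delta> * norm x \<le> h x" if "x \<in> V" for x
  proof (cases "x = 0")
    case True then show ?thesis using hnn by simp
  next
    case False
    define u where "u = (1 / norm x) *\<^sub>R x"
    have "u \<in> sphere 0 1 \<inter> V" using that False by (auto simp: u_def V_def span_mul)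
    then have "\<delta> \<le> h u" using \<delta> by blast
    moreover have "h x = norm x * h u"
    proof -
      have "h x = (\<Sum>i\<in>S. max 0 (norm x * (b i \<bullet> u)))"
        using False by (simp add: h_def u_def)
      also have "\<dots> = (\<Sum>i\<in>S. norm x * max 0 (b i \<bullet> u))"
        by (rule sum.cong) (auto simp: max_mult_distrib_left)
      finally show ?thesis by (simp add: h_def sum_distrib_left)
    qed
    ultimately show ?thesis by (metis mult.commute mult_left_mono norm_ge_zero)
  qed
  have glow: "wm * h x \<le> g x" for x
    unfolding h_def g_def sum_distrib_left
  proof (rule sum_mono)
    fix i assume i: "i \<in> S"
    show "wm * max 0 (b i \<bullet> x) \<le> w i * exp (b i \<bullet> x)"
      using wm i exp_ge_max0[of "b i \<bullet> x"] by (intro mult_mono) auto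
  qed
  define R where "R = g 0 / (wm * \<delta>)"
  have "compact (V \<inter> cball 0 R)" unfolding V_def by (intro closed_Int_compact) auto
  moreover have "0 \<in> V \<inter> cball 0 R"
  proof -
    have "0 \<le> g 0" unfolding g_def using wpos by (intro sum_nonneg) (simp add: less_imp_le)
    then have "0 \<le> R" using wm \<delta> by (simp add: R_def)
    then show ?thesis by (simp add: V_def span_zero)
  qed
  ultimately obtain x0 where x0: "x0 \<in> V \<inter> cball 0 R" "\<forall>y\<in>V \<inter> cball 0 R. g x0 \<le> g y"
    using continuous_attains_inf[of "V \<inter> cball 0 R" g] continuous_on_subset[OF gcont] by blast
  have "g x0 \<le> g x" for x
  proof -
    obtain p z where pz: "p \<in> V" "\<And>v. v \<in> V \<Longrightarrow> orthogonal z v" "x = p + z"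
      using orthogonal_subspace_decomp_exists[of "b ` S" x] V_def by metis
    have "b i \<bullet> z = 0" if "i \<in> S" for i
      using pz(2)[of "b i"] that by (auto simp: V_def span_base orthogonal_def inner_commute)
    then have gx: "g x = g p" unfolding g_def pz(3) by (auto simp: inner_add_right intro!: sum.cong)
    show ?thesis
    proof (cases "norm p \<le> R")
      case True then show ?thesis using x0 pz gx by auto
    next
      case False
      have "g x0 \<le> g 0" using x0 \<open>0 \<in> V \<inter> cball 0 R\<close> by blast
      also have "g 0 = wm * \<delta> * R" using wm \<delta> by (simp add: R_def)
      also have "\<dots> \<le> wm * (\<delta> * norm p)" using False wm \<delta> by (simp add: mult.assoc)
      also have "\<dots> \<le> wm * h p" using hlin[OF pz(1)] wm by simp
      also have "\<dots> \<le> g p" by (rule glow)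
      finally show ?thesis using gx by simp
    qed
  qed
  then show ?thesis unfolding g_def by blast
qed

lemma stationary:
  fixes b :: "'m \<Rightarrow> real^'n"
  assumes fin: "finite S"
    and min: "\<forall>x. (\<Sum>i\<in>S. w i * exp (b i \<bullet> x0)) \<le> (\<Sum>i\<in>S. w i * exp (b i \<bullet> x))"
  shows "(\<Sum>i\<in>S. (w i * exp (b i \<bullet> x0)) *\<^sub>R b i) = 0"
proof -
  define v where "v = (\<Sum>i\<in>S. (w i * exp (b i \<bullet> x0)) *\<^sub>R b i)"
  define f where "f t = (\<Sum>i\<in>S. w i * exp (b i \<bullet> x0 + t * (b i \<bullet> v)))" for t
  have D: "(f has_real_derivative (\<Sum>i\<in>S. w i * (exp (b i \<bullet> x0 + 0 * (b i \<bullet> v)) * (b i \<bullet> v)))) (at 0)"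
    unfolding f_def by (auto intro!: derivative_eq_intros simp: mult_ac)
  have "\<forall>y. \<bar>0 - y\<bar> < 1 \<longrightarrow> f 0 \<le> f y"
  proof (intro allI impI)
    fix y :: real
    have "f y = (\<Sum>i\<in>S. w i * exp (b i \<bullet> (x0 + y *\<^sub>R v)))"
      unfolding f_def by (simp add: inner_add_right)
    then show "f 0 \<le> f y" using min by (simp add: f_def)
  qed
  from DERIV_local_min[OF D zero_less_one this]
  have "(\<Sum>i\<in>S. w i * (exp (b i \<bullet> x0) * (b i \<bullet> v))) = 0" by simp
  moreover have "(\<Sum>i\<in>S. w i * (exp (b i \<bullet> x0) * (b i \<bullet> v))) = v \<bullet> v"
    unfolding v_def inner_sum_left by (simp add: mult.assoc)
  ultimately show ?thesis unfolding v_def[symmetric] by simp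
qed

lemma geom:
  fixes a :: "'m \<Rightarrow> 'v::euclidean_space"
  assumes inj: "inj a" and fin: "finite S" and kS: "k \<notin> S" and Sne: "S \<noteq> {}"
    and \<nu>pos: "\<forall>i\<in>S. 0 < \<nu> i" and bal: "(\<Sum>i\<in>S. \<nu> i *\<^sub>R (a i - a k)) = 0"
    and ker: "\<forall>l. (\<Sum>i\<in>S. l i *\<^sub>R (a i - a k)) = 0 \<longrightarrow> (\<exists>r. \<forall>i\<in>S. l i = r * \<nu> i)"
  shows "simplicial_circuit (a ` insert k S)"
proof -
  define N where "N = a ` insert k S"
  define m where "m = sum \<nu> S"
  have mpos: "0 < m" unfolding m_def using \<nu>pos Sne fin by (intro sum_pos) auto
  have finN: "finite N" using fin by (simp add: N_def)
  have injon: "inj_on a (insert k S)" using inj_on_subset[OF inj] by blast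
  have akS: "a k \<notin> a ` S" using kS injD[OF inj] by blast
  have N_eq: "N = insert (a k) (a ` S)" by (simp add: N_def)
  have reidx: "(\<Sum>v\<in>N. f v) = (\<Sum>i\<in>insert k S. f (a i))" for f :: "'v \<Rightarrow> 'b::comm_monoid_add"
    unfolding N_def by (rule sum.reindex[OF injon, unfolded comp_def])
  have dep: "\<exists>r. (\<forall>i\<in>S. u (a i) = r * \<nu> i) \<and> u (a k) = - r * m"
    if u1: "(\<Sum>v\<in>N. u v) = 0" and u2: "(\<Sum>v\<in>N. u v *\<^sub>R v) = 0" for u
  proof -
    have s1: "u (a k) + (\<Sum>i\<in>S. u (a i)) = 0" using u1 reidx[of u] fin kS by simp
    have s2: "u (a k) *\<^sub>R a k + (\<Sum>i\<in>S. u (a i) *\<^sub>R a i) = 0"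
      using u2 reidx[of "\<lambda>v. u v *\<^sub>R v"] fin kS by simp
    have "(\<Sum>i\<in>S. u (a i) *\<^sub>R (a i - a k)) = (\<Sum>i\<in>S. u (a i) *\<^sub>R a i) - (\<Sum>i\<in>S. u (a i)) *\<^sub>R a k"
      by (simp add: scaleR_diff_right sum_subtractf scaleR_sum_left)
    also have "\<dots> = 0"
    proof -
      have "(\<Sum>i\<in>S. u (a i)) = - u (a k)" using s1 by (simp add: eq_neg_iff_add_eq_0 add.commute)
      moreover have "(\<Sum>i\<in>S. u (a i) *\<^sub>R a i) = - (u (a k) *\<^sub>R a k)" using s2 by (simp add: eq_neg_iff_add_eq_0 add.commute)
      ultimately show ?thesis by simp
    qed
    finally obtain r where r: "\<forall>i\<in>S. u (a i) = r * \<nu> i" using ker[rule_format, of "\<lambda>i. u (a i)"] by blast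
    have "(\<Sum>i\<in>S. u (a i)) = r * m" using r by (simp add: m_def sum_distrib_left)
    then have "u (a k) = - r * m" using s1 by simp
    then show ?thesis using r by blast
  qed
  have akhull: "a k \<in> convex hull (a ` S)"
  proof -
    have "(\<Sum>i\<in>S. \<nu> i *\<^sub>R a i) - m *\<^sub>R a k = 0"
      using bal by (simp add: scaleR_diff_right sum_subtractf scaleR_sum_left m_def)
    then have e: "(\<Sum>i\<in>S. \<nu> i *\<^sub>R a i) = m *\<^sub>R a k" by simp
    have "(\<Sum>i\<in>S. (\<nu> i / m) *\<^sub>R a i) \<in> convex hull (a ` S)"
      by (rule convex_sum) (use fin mpos \<nu>pos in \<open>auto simp: m_def sum_divide_distrib[symmetric] hull_inc less_imp_le\<close>)
    moreover have "(\<Sum>i\<in>S. (\<nu> i / m) *\<^sub>R a i) = (1/m) *\<^sub>R (\<Sum>i\<in>S. \<nu> i *\<^sub>R a i)"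
      by (simp add: scaleR_sum_right)
    ultimately show ?thesis using e mpos by simp
  qed
  have affdep: "affine_dependent N"
  proof -
    have "N - {a k} = a ` S" using N_eq akS by auto
    then have "a k \<in> affine hull (N - {a k})" using akhull convex_hull_subset_affine_hull by auto
    then show ?thesis unfolding affine_dependent_def N_eq by blast
  qed
  have indep: "\<not> affine_dependent T" if TN: "T \<subset> N" for T
  proof
    assume "affine_dependent T"
    moreover have finT: "finite T" using that finN finite_subset by blast
    ultimately obtain U where U: "sum U T = 0" "\<exists>v\<in>T. U v \<noteq> 0" "(\<Sum>v\<in>T. U v *\<^sub>R v) = 0"
      using affine_dependent_explicit_finite by blast
    define u where "u v = (if v \<in> T then U v else 0)" for v
    have "(\<Sum>v\<in>N. u v) = 0" using that U finN by (simp add: u_def sum.If_cases Int_absorb1 less_imp_le)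
    moreover have "(\<Sum>v\<in>N. u v *\<^sub>R v) = 0"
    proof -
      have "(\<Sum>v\<in>N. u v *\<^sub>R v) = (\<Sum>v\<in>N. if v \<in> T then U v *\<^sub>R v else 0)"
        by (rule sum.cong) (auto simp: u_def)
      also have "\<dots> = (\<Sum>v\<in>T. U v *\<^sub>R v)" using that finN by (simp add: sum.If_cases Int_absorb1 less_imp_le)
      finally show ?thesis using U by simp
    qed
    ultimately obtain r where r: "\<forall>i\<in>S. u (a i) = r * \<nu> i" "u (a k) = - r * m" using dep by blast
    obtain v0 where v0: "v0 \<in> T" "U v0 \<noteq> 0" using U by blast
    have "v0 \<in> N" using v0 that by blast
    have rne: "r \<noteq> 0"
    proof
      assume "r = 0"
      then have "u v0 = 0" using r \<open>v0 \<in> N\<close> by (auto simp: N_def)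
      then show False using v0 by (simp add: u_def)
    qed
    obtain w where w: "w \<in> N" "w \<notin> T" using TN by blast
    then have "u w = 0" by (simp add: u_def)
    moreover have "u w \<noteq> 0" using w(1) r rne mpos \<nu>pos by (auto simp: N_def)
    ultimately show False by simp
  qed
  have circ: "circuit N" unfolding circuit_def using finN affdep indep by blast
  have "a ` S \<subset> N" using N_eq akS by auto
  then have indS: "\<not> affine_dependent (a ` S)" by (rule indep)
  have "convex hull N = convex hull (a ` S)" unfolding N_eq by (rule hull_redundant[OF akhull])
  then have "{p. p extreme_point_of (convex hull N)} = a ` S"
    using extreme_point_of_convex_hull_affine_independent[OF indS] by auto
  moreover have "card (a ` S) = card S" using injon by (simp add: card_image inj_on_subset[OF injon])
  moreover have "card N = card S + 1" unfolding N_def using injon fin kS by (simp add: card_image)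
  ultimately show ?thesis using circ unfolding simplicial_circuit_def N_def[symmetric] by simp
qed

lemma key:
  fixes a :: "'m::finite \<Rightarrow> real^'n" and c :: "real^'m"
  assumes inj: "inj a"
    and ext: "\<And>x y. x \<in> C_SAGE a \<Longrightarrow> y \<in> C_SAGE a \<Longrightarrow> x + y = c \<Longrightarrow> \<exists>t\<ge>0. x = t *\<^sub>R c"
    and cAGE: "c \<in> C_AGE a k" and ck: "c$k < 0"
  shows "simplicial_circuit (a ` {i. c$i \<noteq> 0})"
proof -
  define S where "S = {i. i \<noteq> k \<and> c$i \<noteq> 0}"
  have finS: "finite S" by simp
  have kS: "k \<notin> S" by (simp add: S_def)
  have cpos: "\<forall>i\<in>S. 0 < c$i" using cAGE by (auto simp: C_AGE_def S_def order_le_less)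
  have supp: "{i. c$i \<noteq> 0} = insert k S" using ck by (auto simp: S_def)
  have cnn: "c \<in> C_NNS a" using cAGE by (simp add: C_AGE_def)
  have csplit: "Sig a c x = exp (a k \<bullet> x) * (c$k + (\<Sum>i\<in>S. c$i * exp ((a i - a k) \<bullet> x)))" for x
    by (rule Sig_split) (auto simp: S_def)
  have cge: "0 \<le> c$k + (\<Sum>i\<in>S. c$i * exp ((a i - a k) \<bullet> x))" for x
  proof -
    have "0 \<le> Sig a c x" using cnn by (simp add: C_NNS_def)
    then show ?thesis using csplit[of x] by (simp add: zero_le_mult_iff)
  qed
  have Sne: "S \<noteq> {}" using cge[of 0] ck by auto
  have noy': "\<forall>y. (\<forall>i\<in>S. (a i - a k) \<bullet> y \<le> 0) \<longrightarrow> (\<forall>i\<in>S. (a i - a k) \<bullet> y = 0)"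
  proof (intro allI impI)
    fix y assume yS: "\<forall>i\<in>S. (a i - a k) \<bullet> y \<le> 0"
    have "\<forall>i. i \<noteq> k \<and> c$i \<noteq> 0 \<longrightarrow> (a i - a k) \<bullet> y = 0"
    proof (rule noy)
      show "\<exists>t\<ge>0. x = t *\<^sub>R c" if "x \<in> C_SAGE a" "z \<in> C_SAGE a" "x + z = c" for x z
        using ext that by blast
    qed (use cAGE ck yS in \<open>auto simp: S_def\<close>)
    then show "\<forall>i\<in>S. (a i - a k) \<bullet> y = 0" by (simp add: S_def)
  qed
  obtain x0 where x0: "\<forall>x. (\<Sum>i\<in>S. c$i * exp ((a i - a k) \<bullet> x0)) \<le> (\<Sum>i\<in>S. c$i * exp ((a i - a k) \<bullet> x))"
    using minimizer_exists[OF finS cpos noy'] by blast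
  define \<nu> where "\<nu> i = c$i * exp ((a i - a k) \<bullet> x0)" for i
  have \<nu>pos: "\<forall>i\<in>S. 0 < \<nu> i" using cpos by (simp add: \<nu>_def)
  have bal: "(\<Sum>i\<in>S. \<nu> i *\<^sub>R (a i - a k)) = 0" using stationary[OF finS x0] by (simp add: \<nu>_def)
  have c\<nu>: "\<nu> i * exp (-((a i - a k) \<bullet> x0)) = c$i" for i by (simp add: \<nu>_def exp_minus)
  have mk: "sum \<nu> S = - c$k"
  proof -
    define c' where "c' = (\<chi> i. if i \<in> S then \<nu> i * exp (-((a i - a k) \<bullet> x0)) else if i = k then -(\<Sum>j\<in>S. \<nu> j) else 0)"
    have c'AGE: "c' \<in> C_AGE a k" unfolding c'_def by (rule AGE_from_nu[OF kS _ bal]) (use \<nu>pos in auto)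
    have ge: "0 \<le> c$k + sum \<nu> S" using cge[of x0] by (simp add: \<nu>_def)
    have e_nn: "\<forall>i. 0 \<le> (c - c')$i"
    proof
      fix i show "0 \<le> (c - c')$i"
        using ge c\<nu>[of i] by (cases "i \<in> S"; cases "i = k") (auto simp: c'_def S_def)
    qed
    from ext[OF nonneg_SAGE[OF e_nn] AGE_SAGE[OF c'AGE]] obtain t where t: "t \<ge> 0" "c - c' = t *\<^sub>R c" by auto
    obtain j where j: "j \<in> S" using Sne by blast
    have "(c - c')$j = 0" using j c\<nu>[of j] by (simp add: c'_def)
    then have "t * c$j = 0" using arg_cong[OF t(2), of "\<lambda>v. v$j"] by simp
    then have "t = 0" using cpos j by force
    then have "(c - c')$k = 0" using t by simp
    then show ?thesis using kS by (simp add: c'_def)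
  qed
  have ker: "\<forall>l. (\<Sum>i\<in>S. l i *\<^sub>R (a i - a k)) = 0 \<longrightarrow> (\<exists>r. \<forall>i\<in>S. l i = r * \<nu> i)"
  proof (intro allI impI)
    fix l assume lb: "(\<Sum>i\<in>S. l i *\<^sub>R (a i - a k)) = 0"
    define \<mu> where "\<mu> = Min (\<nu> ` S)"
    have \<mu>: "0 < \<mu>" "\<forall>i\<in>S. \<mu> \<le> \<nu> i" using finS Sne \<nu>pos by (auto simp: \<mu>_def)
    define M where "M = (\<Sum>i\<in>S. \<bar>l i\<bar>) + 1"
    have M: "\<forall>i\<in>S. \<bar>l i\<bar> < M"
    proof
      fix i assume "i \<in> S"
      then have "\<bar>l i\<bar> \<le> (\<Sum>i\<in>S. \<bar>l i\<bar>)" using finS by (intro member_le_sum) auto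
      then show "\<bar>l i\<bar> < M" by (simp add: M_def)
    qed
    have Mpos: "0 < M" unfolding M_def by (simp add: sum_nonneg add_nonneg_pos)
    define \<epsilon> where "\<epsilon> = \<mu> / M"
    have \<epsilon>pos: "0 < \<epsilon>" using \<mu> Mpos by (simp add: \<epsilon>_def)
    have small: "\<epsilon> * \<bar>l i\<bar> < \<nu> i" if "i \<in> S" for i
    proof -
      have "\<epsilon> * \<bar>l i\<bar> < \<epsilon> * M" using M that \<epsilon>pos by simp
      also have "\<dots> = \<mu>" using Mpos by (simp add: \<epsilon>_def)
      finally have "\<epsilon> * \<bar>l i\<bar> < \<mu>" .
      moreover have "\<mu> \<le> \<nu> i" using \<mu> that by blast
      ultimately show ?thesis by linarith
    qed
    define \<nu>1 where "\<nu>1 i = (\<nu> i + \<epsilon> * l i) / 2" for i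
    define \<nu>2 where "\<nu>2 i = (\<nu> i - \<epsilon> * l i) / 2" for i
    have pos12: "\<forall>i\<in>S. 0 \<le> \<nu>1 i" "\<forall>i\<in>S. 0 \<le> \<nu>2 i"
  proof -
    have b: "- \<nu> i \<le> \<epsilon> * l i \<and> \<epsilon> * l i \<le> \<nu> i" if "i \<in> S" for i
    proof -
      have "\<bar>\<epsilon> * l i\<bar> < \<nu> i" using small[OF that] \<epsilon>pos by (simp add: abs_mult)
      then show ?thesis by linarith
    qed
    show "\<forall>i\<in>S. 0 \<le> \<nu>1 i"
    proof
      fix i assume "i \<in> S"
      from b[OF this] have "0 \<le> \<nu> i + \<epsilon> * l i" by (simp add: add.commute neg_le_iff_le le_diff_eq[symmetric])
      then show "0 \<le> \<nu>1 i" unfolding \<nu>1_def by simp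
    qed
    show "\<forall>i\<in>S. 0 \<le> \<nu>2 i" unfolding \<nu>2_def using b by (simp)
  qed
    have bal1: "(\<Sum>i\<in>S. \<nu>1 i *\<^sub>R (a i - a k)) = 0"
    proof -
      have "(\<Sum>i\<in>S. \<nu>1 i *\<^sub>R (a i - a k)) = (1/2) *\<^sub>R (\<Sum>i\<in>S. \<nu> i *\<^sub>R (a i - a k)) + (\<epsilon>/2) *\<^sub>R (\<Sum>i\<in>S. l i *\<^sub>R (a i - a k))"
        by (simp add: \<nu>1_def scaleR_sum_right sum.distrib[symmetric] add_divide_distrib scaleR_add_left)
      then show ?thesis using bal lb by simp
    qed
    have bal2: "(\<Sum>i\<in>S. \<nu>2 i *\<^sub>R (a i - a k)) = 0"
    proof -
      have "(\<Sum>i\<in>S. \<nu>2 i *\<^sub>R (a i - a k)) = (1/2) *\<^sub>R (\<Sum>i\<in>S. \<nu> i *\<^sub>R (a i - a k)) - (\<epsilon>/2) *\<^sub>R (\<Sum>i\<in>S. l i *\<^sub>R (a i - a k))"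
        by (simp add: \<nu>2_def scaleR_sum_right sum_subtractf[symmetric] diff_divide_distrib scaleR_diff_left)
      then show ?thesis using bal lb by simp
    qed
    define c1 where "c1 = (\<chi> i. if i \<in> S then \<nu>1 i * exp (-((a i - a k) \<bullet> x0)) else if i = k then -(\<Sum>j\<in>S. \<nu>1 j) else 0)"
    define c2 where "c2 = (\<chi> i. if i \<in> S then \<nu>2 i * exp (-((a i - a k) \<bullet> x0)) else if i = k then -(\<Sum>j\<in>S. \<nu>2 j) else 0)"
    have c1AGE: "c1 \<in> C_AGE a k" unfolding c1_def by (rule AGE_from_nu[OF kS pos12(1) bal1])
    have c2AGE: "c2 \<in> C_AGE a k" unfolding c2_def by (rule AGE_from_nu[OF kS pos12(2) bal2])
    have sum12: "(\<Sum>j\<in>S. \<nu>1 j) + (\<Sum>j\<in>S. \<nu>2 j) = sum \<nu> S"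
      by (simp add: \<nu>1_def \<nu>2_def sum.distrib[symmetric] add_divide_distrib[symmetric])
    have "c1 + c2 = c"
    proof (rule vec_eq_iff[THEN iffD2], rule allI)
      fix i
      show "(c1 + c2)$i = c$i"
      proof (cases "i \<in> S")
        case True
        have "(c1 + c2)$i = (\<nu>1 i + \<nu>2 i) * exp (-((a i - a k) \<bullet> x0))"
          using True by (simp add: c1_def c2_def distrib_right)
        also have "\<nu>1 i + \<nu>2 i = \<nu> i" by (simp add: \<nu>1_def \<nu>2_def field_simps)
        finally show ?thesis using c\<nu>[of i] by simp
      next
        case False
        then show ?thesis using sum12 mk kS
          by (cases "i = k") (auto simp: c1_def c2_def S_def)
      qed
    qed
    from ext[OF AGE_SAGE[OF c1AGE] AGE_SAGE[OF c2AGE] this] obtain t where t: "c1 = t *\<^sub>R c" by auto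
    have "l i = ((2*t - 1) / \<epsilon>) * \<nu> i" if i: "i \<in> S" for i
    proof -
      have "\<nu>1 i * exp (-((a i - a k) \<bullet> x0)) = t * c$i"
        using arg_cong[OF t, of "\<lambda>v. v$i"] i by (simp add: c1_def)
      also have "\<dots> = (t * \<nu> i) * exp (-((a i - a k) \<bullet> x0))" using c\<nu>[of i] by simp
      finally have "\<nu>1 i = t * \<nu> i" by simp
      then show ?thesis using \<epsilon>pos by (simp add: \<nu>1_def field_simps)
    qed
    then show "\<exists>r. \<forall>i\<in>S. l i = r * \<nu> i" by blast
  qed
  show ?thesis unfolding supp by (rule geom[OF inj finS kS Sne \<nu>pos bal ker])
qed

theorem mainTheorem4:
  fixes a :: "'m::finite \<Rightarrow> real^'n" and c :: "real^'m"
  assumes "inj a"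
    and "generates_extreme_ray (C_SAGE a) c"
  shows "(\<exists>p. a ` {i. c $ i \<noteq> 0} = {p}) \<or> simplicial_circuit (a ` {i. c $ i \<noteq> 0})"
proof -
  have c0: "c \<noteq> 0" and F: "((\<lambda>t. t *\<^sub>R c) ` {0..}) face_of (C_SAGE a)"
    using assms(2) by (auto simp: generates_extreme_ray_def)
  have cC: "c \<in> C_SAGE a"
  proof -
    have "c \<in> (\<lambda>t. t *\<^sub>R c) ` {0..}" by (rule image_eqI[of _ _ 1]) auto
    then show ?thesis using F face_of_imp_subset by blast
  qed
  have ext: "\<exists>t\<ge>0. x = t *\<^sub>R c" if "x \<in> C_SAGE a" "y \<in> C_SAGE a" "x + y = c" for x y
    by (rule ray_face[OF F]) (use that in \<open>auto intro: SAGE_scale\<close>)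
  obtain f where f: "\<forall>k. f k \<in> C_AGE a k" "c = (\<Sum>k\<in>UNIV. f k)" using cC unfolding C_SAGE_def by blast
  obtain k0 where k0: "f k0 \<noteq> 0"
  proof (rule ccontr)
    assume "\<not> thesis"
    then have "\<forall>k. f k = 0" using that by blast
    then show False using f c0 by simp
  qed
  define g where "g = f(k0 := 0)"
  have gA: "\<forall>k. g k \<in> C_AGE a k"
  proof
    fix k show "g k \<in> C_AGE a k" using f(1) nonneg_AGE[of 0 a k] by (cases "k = k0") (simp_all add: g_def)
  qed
  have "(\<Sum>k\<in>UNIV. f k) = f k0 + (\<Sum>k\<in>UNIV - {k0}. f k)" by (simp add: sum.remove)
  moreover have "(\<Sum>k\<in>UNIV. g k) = (\<Sum>k\<in>UNIV - {k0}. f k)"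
  proof -
    have "(\<Sum>k\<in>UNIV. g k) = g k0 + (\<Sum>k\<in>UNIV - {k0}. g k)" by (rule sum.remove) auto
    also have "(\<Sum>k\<in>UNIV - {k0}. g k) = (\<Sum>k\<in>UNIV - {k0}. f k)" by (rule sum.cong) (auto simp: g_def)
    finally show ?thesis by (simp add: g_def)
  qed
  ultimately have "c - f k0 = (\<Sum>k\<in>UNIV. g k)" using f by simp
  then have rest: "c - f k0 \<in> C_SAGE a" using gA unfolding C_SAGE_def by blast
  have fk0: "f k0 \<in> C_AGE a k0" using f(1) by blast
  have "f k0 + (c - f k0) = c" by simp
  from ext[OF AGE_SAGE[OF fk0] rest this] obtain t where t: "t \<ge> 0" "f k0 = t *\<^sub>R c" by blast
  have "t \<noteq> 0" using t k0 by auto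
  then have "(1/t) *\<^sub>R f k0 = c" unfolding t(2) by simp
  moreover have "(1/t) *\<^sub>R f k0 \<in> C_AGE a k0" by (rule AGE_scale[OF fk0]) (use t in simp)
  ultimately have cA: "c \<in> C_AGE a k0" by simp
  show ?thesis
  proof (cases "c$k0 < 0")
    case True
    have "simplicial_circuit (a ` {i. c $ i \<noteq> 0})"
    proof (rule key[OF assms(1) _ cA True])
      show "\<exists>t\<ge>0. x = t *\<^sub>R c" if "x \<in> C_SAGE a" "y \<in> C_SAGE a" "x + y = c" for x y
        using ext that by blast
    qed
    then show ?thesis by blast
  next
    case False
    have cnn: "\<forall>i. 0 \<le> c$i"
    proof
      fix i show "0 \<le> c$i" using cA False by (cases "i = k0") (auto simp: C_AGE_def)
    qed
    obtain j where j: "c$j \<noteq> 0" using c0 by (metis vec_eq_iff zero_index)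
    define x where "x = (\<chi> i. if i = j then c$j else 0)"
    have xS: "x \<in> C_SAGE a" by (rule nonneg_SAGE) (use cnn in \<open>simp add: x_def\<close>)
    have yS: "c - x \<in> C_SAGE a" by (rule nonneg_SAGE) (use cnn in \<open>simp add: x_def\<close>)
    from ext[OF xS yS] obtain s where s: "x = s *\<^sub>R c" by auto
    have "s * c$j = c$j" using arg_cong[OF s, of "\<lambda>v. v$j"] by (simp add: x_def)
    then have "s \<noteq> 0" using j by auto
    have "c$i = 0" if "i \<noteq> j" for i
    proof -
      have "s * c$i = 0" using arg_cong[OF s, of "\<lambda>v. v$i"] that by (simp add: x_def)
      then show ?thesis using \<open>s \<noteq> 0\<close> by simp
    qed
    then have "{i. c$i \<noteq> 0} = {j}" using j by blast
    then show ?thesis by auto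
  qed
qed

end
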